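(* Let $q\in X^*\setminus\{e\}$ and let $q_0$ be the shortest word in $P_q$. Then $$\sqrt[*]{P_q}=\bigl(P_q\setminus\{q_0\}^*\bigr)\cup\{q_0\}\subseteq\{q_0\}\cup\{v: v\sqsubseteq q\ \wedge\ |q_0|+|v|>|q|\}.$$
   Context: $X$ is a finite alphabet; $X^*$ the finite words (empty word $e$); $|w|$ is length; $w\sqsubseteq\eta$ means $w$ is a prefix of $\eta$, $w\sqsubset\eta$ a proper prefix. $P_q:=\{v: e\sqsubset v\sqsubseteq q\sqsubset v\cdot q\}$; $q_0$ is its shortest element. The star root of $P_q$ is $\sqrt[*]{P_q}:=P_q\setminus(P_q^2\cdot P_q^* )$, i.e. the elements of $P_q$ that are not a concatenation of two or more elements of $P_q$; here $L^*=\bigcup_{i\in\mathbb{N}}L^i$. *)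

theory Defs
  imports Main "HOL-Library.Sublist"
begin

text \<open>Words over a finite alphabet are lists; e is the empty list.\<close>

definition conc :: "'a list set \<Rightarrow> 'a list set \<Rightarrow> 'a list set" where
  "conc A B = {u @ v | u v. u \<in> A \<and> v \<in> B}"

fun lang_pow :: "'a list set \<Rightarrow> nat \<Rightarrow> 'a list set" where
  "lang_pow L 0 = {[]}"
| "lang_pow L (Suc n) = conc L (lang_pow L n)"

definition lang_star :: "'a list set \<Rightarrow> 'a list set" where
  "lang_star L = (\<Union>i. lang_pow L i)"

definition Pq :: "'a list \<Rightarrow> 'a list set" where
  "Pq q = {v. strict_prefix [] v \<and> prefix v q \<and> strict_prefix q (v @ q)}"

definition star_root :: "'a list set \<Rightarrow> 'a list set" where
  "star_root L = L - conc (lang_pow L 2) (lang_star L)"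

end

theory Submission imports Defs begin

definition per :: "'a list \<Rightarrow> nat \<Rightarrow> bool" where
  "per q a \<longleftrightarrow> (\<forall>i. i + a < length q \<longrightarrow> q!i = q!(i+a))"

lemma prefix_nth_iff:
  "prefix v q \<longleftrightarrow> length v \<le> length q \<and> (\<forall>i<length v. v!i = q!i)"
proof
  assume "prefix v q" then obtain z where "q = v @ z" by (auto simp: prefix_def)
  then show "length v \<le> length q \<and> (\<forall>i<length v. v!i = q!i)" by (auto simp: nth_append)
next
  assume h: "length v \<le> length q \<and> (\<forall>i<length v. v!i = q!i)"
  have "v = take (length v) q" using h by (intro nth_equalityI) auto
  then show "prefix v q" by (metis take_is_prefix)
qed

lemma Pq_iff: "v \<in> Pq q \<longleftrightarrow> v \<noteq> [] \<and> prefix v q \<and> per q (length v)"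
proof -
  have A: "strict_prefix [] v \<longleftrightarrow> v \<noteq> []" by (auto simp: strict_prefix_def)
  have B: "prefix v q \<Longrightarrow> v \<noteq> [] \<Longrightarrow> strict_prefix q (v @ q) \<longleftrightarrow> per q (length v)"
  proof -
    assume pv: "prefix v q" and ne: "v \<noteq> []"
    have lv: "length v \<le> length q" and vq: "\<forall>i<length v. v!i = q!i"
      using pv prefix_nth_iff by blast+
    have "strict_prefix q (v @ q) \<longleftrightarrow> prefix q (v @ q)" using ne
      by (auto simp: strict_prefix_def)
    also have "\<dots> \<longleftrightarrow> (\<forall>i<length q. q!i = (v@q)!i)"
      by (simp add: prefix_nth_iff)
    also have "\<dots> \<longleftrightarrow> per q (length v)"
    proof
      assume h: "\<forall>i<length q. q!i = (v@q)!i"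
      show "per q (length v)" unfolding per_def
      proof (intro allI impI)
        fix i assume "i + length v < length q"
        then have "q!(i+length v) = (v@q)!(i+length v)" using h by auto
        then show "q!i = q!(i+length v)" by (simp add: nth_append)
      qed
    next
      assume h: "per q (length v)"
      show "\<forall>i<length q. q!i = (v@q)!i"
      proof (intro allI impI)
        fix i assume i: "i < length q"
        show "q!i = (v@q)!i"
        proof (cases "i < length v")
          case True then show ?thesis using vq by (simp add: nth_append)
        next
          case False
          then have "q!(i - length v) = q!(i - length v + length v)"
            using h i unfolding per_def by auto
          then show ?thesis using False by (simp add: nth_append)
        qed
      qed
    qed
    finally show ?thesis .
  qed
  show ?thesis unfolding Pq_def using A B by auto
qed

lemma per_reduce:
  assumes "per q a" "per q b" "b < a" "a + b \<le> length q"
  shows "per q (a - b)"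
  unfolding per_def
proof (intro allI impI)
  fix i assume i: "i + (a - b) < length q"
  show "q!i = q!(i + (a - b))"
  proof (cases "b \<le> i")
    case True
    have 1: "q!(i-b) = q!(i-b+b)" using assms(2) i True unfolding per_def by auto
    have 2: "q!(i-b) = q!(i-b+a)" using assms(1) i True assms(3) unfolding per_def by auto
    show ?thesis using 1 2 True assms(3) by (simp add: add.commute)
  next
    case False
    have 1: "q!i = q!(i+a)" using assms(1,4) False unfolding per_def by auto
    have 2: "q!(i+(a-b)) = q!(i+(a-b)+b)" using assms(2,3,4) False unfolding per_def by auto
    show ?thesis using 1 2 assms(3) by simp
  qed
qed

lemma per_dvd:
  assumes q0: "q0 \<in> Pq q" and minl: "\<forall>v \<in> Pq q. length q0 \<le> length v"
  shows "per q a \<Longrightarrow> 0 < a \<Longrightarrow> a + length q0 \<le> length q \<Longrightarrow> length q0 dvd a"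
proof (induction a rule: less_induct)
  case (less a)
  let ?p = "length q0"
  have pp: "per q ?p" and p0: "0 < ?p" using q0 Pq_iff by auto
  show ?case
  proof (cases "a < ?p")
    case True
    have al: "a < length q" using less.prems p0 by linarith
    have "take a q \<in> Pq q" unfolding Pq_iff using less.prems al
      by (auto simp: take_is_prefix min_def)
    then have "?p \<le> length (take a q)" using minl by blast
    then have "?p \<le> a" using al by simp
    then show ?thesis using True by simp
  next
    case False
    show ?thesis
    proof (cases "a = ?p")
      case True then show ?thesis by simp
    next
      case F2: False
      then have lt: "?p < a" using False by simp
      have "per q (a - ?p)" using per_reduce[OF less.prems(1) pp lt] less.prems(3) by simp
      then have "?p dvd (a - ?p)" using less.IH[of "a - ?p"] lt p0 less.prems(3) by auto
      then show ?thesis using lt by (metis dvd_diff_nat dvd_refl le_add_diff_inverse2 less_imp_le_nat dvd_add)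
    qed
  qed
qed

lemma lang_pow_single: "lang_pow {x} m = {concat (replicate m x)}"
  by (induction m) (auto simp: conc_def)

lemma in_lang_star: "v \<in> lang_star L \<longleftrightarrow> (\<exists>i. v \<in> lang_pow L i)"
  by (auto simp: lang_star_def)

lemma per_mod:
  assumes "per q p" "0 < p"
  shows "i < length q \<Longrightarrow> q!i = q!(i mod p)"
proof (induction i rule: less_induct)
  case (less i)
  show ?case
  proof (cases "i < p")
    case True then show ?thesis by simp
  next
    case False
    have "q!(i-p) = q!(i-p+p)" using assms(1) less.prems False unfolding per_def by auto
    moreover have "q!(i-p) = q!((i-p) mod p)" using less.IH[of "i-p"] less.prems assms(2) False by auto
    moreover have "(i-p) mod p = i mod p" using False by (simp add: le_mod_geq)
    ultimately show ?thesis using False by simp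
  qed
qed

lemma take_rep:
  assumes "per q p" "0 < p"
  shows "m * p \<le> length q \<Longrightarrow> take (m*p) q = concat (replicate m (take p q))"
proof (induction m)
  case 0 then show ?case by simp
next
  case (Suc m)
  have le: "m*p + p \<le> length q" using Suc.prems by (simp add: add.commute)
  have "take (m*p + p) q = take (m*p) q @ take p (drop (m*p) q)" by (rule take_add)
  moreover have "take p (drop (m*p) q) = take p q"
  proof (rule nth_equalityI)
    show "length (take p (drop (m*p) q)) = length (take p q)" using le by simp
  next
    fix i assume i: "i < length (take p (drop (m*p) q))"
    then have i': "i < p" "m*p + i < length q" using le by auto
    have "q!(m*p+i) = q!((m*p+i) mod p)" using per_mod[OF assms] i' by blast
    also have "\<dots> = q!(i mod p)" by (simp add: mod_add_left_eq[symmetric])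
    also have "\<dots> = q!i" using i' by simp
    finally show "take p (drop (m*p) q) ! i = take p q ! i" using i' by simp
  qed
  ultimately have "take (m*p + p) q = concat (replicate m (take p q)) @ take p q"
    using Suc le by simp
  moreover have "concat (replicate (Suc m) (take p q)) = concat (replicate m (take p q)) @ take p q"
    by (metis concat.simps(2) concat_append replicate_Suc replicate_append_same self_append_conv)
  ultimately show ?case by (simp add: add.commute)
qed

lemma rep_in_Pq: "q0 \<in> Pq q \<Longrightarrow> concat (replicate k q0) \<in> lang_pow (Pq q) k"
  by (induction k) (auto simp: conc_def)

theorem mainTheorem11:
  fixes q q0 :: "('a::finite) list"
  assumes "q \<noteq> []"
    and "q0 \<in> Pq q"
    and "\<forall>v \<in> Pq q. length q0 \<le> length v"
  shows "star_root (Pq q) = (Pq q - lang_star {q0}) \<union> {q0}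
         \<and> (Pq q - lang_star {q0}) \<union> {q0}
             \<subseteq> {q0} \<union> {v. prefix v q \<and> length q0 + length v > length q}"
proof -
  define p where "p = length q0"
  have q0P: "q0 \<noteq> []" "prefix q0 q" "per q p" using assms(2) Pq_iff p_def by auto
  have p0: "0 < p" using q0P p_def by simp
  have pq: "p \<le> length q" using q0P p_def prefix_length_le by blast
  have q0t: "q0 = take p q" using q0P(2) p_def by (metis prefix_def append_eq_conv_conj)
  have minl: "\<And>v. v \<in> Pq q \<Longrightarrow> p \<le> length v" using assms(3) p_def by auto
  have dvdP: "\<And>u. u \<in> Pq q \<Longrightarrow> length u + p \<le> length q \<Longrightarrow> p dvd length u"
    using per_dvd[OF assms(2,3)] Pq_iff p_def by (metis add.commute length_greater_0_conv)
  have dvdpow: "\<And>w. w \<in> lang_pow (Pq q) n \<Longrightarrow> length w + p \<le> length q \<Longrightarrow> p dvd length w" for n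
  proof (induction n)
    case 0 then show ?case by simp
  next
    case (Suc n)
    then obtain x w' where xw: "w = x @ w'" "x \<in> Pq q" "w' \<in> lang_pow (Pq q) n" by (auto simp: conc_def)
    have "p dvd length x" using dvdP xw Suc.prems by auto
    moreover have "p dvd length w'" using Suc.IH xw Suc.prems by auto
    ultimately show ?case using xw by simp
  qed
  have repP: "\<And>v. v \<in> Pq q \<Longrightarrow> p dvd length v \<Longrightarrow> v \<in> lang_star {q0}"
  proof -
    fix v assume v: "v \<in> Pq q" "p dvd length v"
    from v(2) obtain m where m0: "length v = p * m" by (rule dvdE)
    then have m: "length v = m * p" by (simp add: mult.commute)
    have pv: "prefix v q" using v Pq_iff by auto
    then have "v = take (length v) q" by (metis prefix_def append_eq_conv_conj)
    also have "\<dots> = concat (replicate m q0)"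
    proof -
      have mle: "m * p \<le> length q" using m pv prefix_length_le by metis
      show ?thesis using take_rep[OF q0P(3) p0 mle] q0t m by simp
    qed
    finally show "v \<in> lang_star {q0}" using lang_pow_single in_lang_star by blast
  qed
  have part1: "star_root (Pq q) = (Pq q - lang_star {q0}) \<union> {q0}"
  proof
    show "star_root (Pq q) \<subseteq> (Pq q - lang_star {q0}) \<union> {q0}"
    proof
      fix v assume v: "v \<in> star_root (Pq q)"
      then have vP: "v \<in> Pq q" and nc: "v \<notin> conc (lang_pow (Pq q) 2) (lang_star (Pq q))"
        by (auto simp: star_root_def)
      show "v \<in> (Pq q - lang_star {q0}) \<union> {q0}"
      proof (rule ccontr)
        assume "v \<notin> (Pq q - lang_star {q0}) \<union> {q0}"
        then have vs: "v \<in> lang_star {q0}" and vq: "v \<noteq> q0" using vP by auto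
        from vs obtain m where "v \<in> lang_pow {q0} m" unfolding in_lang_star by blast
        then have vm: "v = concat (replicate m q0)" unfolding lang_pow_single by simp
        have "v \<noteq> []" using vP unfolding Pq_iff by blast
        then have "m \<noteq> 0" using vm by (cases m) auto
        moreover have "m \<noteq> 1" using vm vq by (cases m) auto
        ultimately obtain k where k: "m = Suc (Suc k)" by (cases m; cases "m - 1") auto
        have "v = (q0 @ q0 @ []) @ concat (replicate k q0)" using vm k by simp
        moreover have "q0 @ q0 @ [] \<in> lang_pow (Pq q) 2" using assms(2)
          unfolding numeral_2_eq_2 lang_pow.simps conc_def by blast
        moreover have "concat (replicate k q0) \<in> lang_star (Pq q)"
          using rep_in_Pq[OF assms(2), of k] unfolding in_lang_star by blast
        ultimately have "v \<in> conc (lang_pow (Pq q) 2) (lang_star (Pq q))"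
          unfolding conc_def by blast
        then show False using nc by blast
      qed
    qed
  next
    show "(Pq q - lang_star {q0}) \<union> {q0} \<subseteq> star_root (Pq q)"
    proof
      fix v assume v: "v \<in> (Pq q - lang_star {q0}) \<union> {q0}"
      then have vP: "v \<in> Pq q" using assms(2) by auto
      have "v \<notin> conc (lang_pow (Pq q) 2) (lang_star (Pq q))"
      proof
        assume "v \<in> conc (lang_pow (Pq q) 2) (lang_star (Pq q))"
        then obtain x w where xw: "v = x @ w" "x \<in> lang_pow (Pq q) 2" "w \<in> lang_star (Pq q)"
          by (auto simp: conc_def)
        from xw(2) have "x \<in> conc (Pq q) (conc (Pq q) {[]})" by (simp add: numeral_2_eq_2)
        then obtain u1 u2 where u: "x = u1 @ u2" "u1 \<in> Pq q" "u2 \<in> Pq q" by (auto simp: conc_def)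
        from xw(3) obtain n where wn: "w \<in> lang_pow (Pq q) n" by (auto simp: in_lang_star)
        have d: "v = u1 @ u2 @ w" using xw u by simp
        have ln: "length v = length u1 + length u2 + length w" using d by simp
        have l1: "p \<le> length u1" "p \<le> length u2" using u minl by auto
        have lv: "length v \<le> length q" using vP Pq_iff prefix_length_le by blast
        show False
        proof (cases "v = q0")
          case True
          then have "length v = p" using p_def by simp
          then show False using ln l1 p0 by linarith
        next
          case False
          then have nst: "v \<notin> lang_star {q0}" using v by auto
          have "length u1 + p \<le> length q" using ln l1 lv by linarith
          then have a1: "p dvd length u1" using dvdP u(2) by blast
          have uw: "u2 @ w \<in> lang_pow (Pq q) (Suc n)" using u wn by (auto simp: conc_def)
          have "length (u2 @ w) + p \<le> length q" using ln l1 lv by simp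
          then have "p dvd length (u2 @ w)" using dvdpow uw by blast
          then have "p dvd length v" using a1 d by simp
          then show False using repP vP nst by blast
        qed
      qed
      then show "v \<in> star_root (Pq q)" using vP by (simp add: star_root_def)
    qed
  qed
  have part2: "(Pq q - lang_star {q0}) \<union> {q0}
             \<subseteq> {q0} \<union> {v. prefix v q \<and> length q0 + length v > length q}"
  proof
    fix v assume v: "v \<in> (Pq q - lang_star {q0}) \<union> {q0}"
    show "v \<in> {q0} \<union> {v. prefix v q \<and> length q0 + length v > length q}"
    proof (cases "v = q0")
      case True then show ?thesis by simp
    next
      case False
      then have vP: "v \<in> Pq q" and nst: "v \<notin> lang_star {q0}" using v by auto
      have "\<not> length v + p \<le> length q" using dvdP repP vP nst by blast
      then show ?thesis using vP Pq_iff p_def by auto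
    qed
  qed
  show ?thesis using part1 part2 by blast
qed

end
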